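(* Let $d\ge 2$, let $\beta_1,\ldots,\beta_d>-1$, let $k$ be a real exponent, and let $E\subset\mathbb{R}^d$ be an affine hyperplane with $\mathrm{dist}(E,0)=h\in[0,1)$. Then $$\int_{E^d}\big(\mathrm{Vol}_{d-1}(\mathrm{conv}(x_1,\ldots,x_d))\big)^k\prod_{i=1}^d f_{d,\beta_i}(x_i)\prod_{i=1}^d\lambda_E(\mathrm{d}x_i)=\frac{\prod_{i=1}^d c_{d,\beta_i}}{\prod_{i=1}^d c_{d-1,\beta_i}}\,(1-h^2)^{\sum_{i=1}^d\beta_i+\frac{d-1}{2}(k+d)}\,\mathbb{E}\big(\Delta_{d-1}^{(\beta_1,\ldots,\beta_d)}\big)^k,$$ where $\lambda_E$ is the $(d-1)$-dimensional Lebesgue measure on $E$ and $\Delta_{d-1}^{(\beta_1,\ldots,\beta_d)}=\mathrm{Vol}_{d-1}(\mathrm{conv}(Y_1,\ldots,Y_d))$ for independent random vectors $Y_1,\ldots,Y_d$ in $\mathbb{R}^{d-1}$ with $Y_i$ having density $f_{d-1,\beta_i}$.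
   Context: For $m\ge1$ and $\beta>-1$, the beta density on $\mathbb{R}^m$ is $f_{m,\beta}(x)=c_{m,\beta}(1-|x|^2)^{\beta}$ for $|x|\le 1$ (and $0$ otherwise), where $c_{m,\beta}=\frac{\Gamma(\frac m2+\beta+1)}{\pi^{m/2}\Gamma(\beta+1)}$. *)

theory Defs
  imports "HOL-Analysis.Analysis"
begin

definition beta_const :: "nat \<Rightarrow> real \<Rightarrow> real" where
  "beta_const m \<beta> = Gamma (real m / 2 + \<beta> + 1) / (pi powr (real m / 2) * Gamma (\<beta> + 1))"

definition beta_dens :: "nat \<Rightarrow> real \<Rightarrow> 'a::real_normed_vector \<Rightarrow> real" where
  "beta_dens m \<beta> x = (if norm x \<le> 1 then beta_const m \<beta> * (1 - (norm x)\<^sup>2) powr \<beta> else 0)"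

text \<open>An affine isometric embedding of R^(d-1) into R^d; its image is an affine hyperplane
  when the dimensions differ by one.\<close>
definition affine_isometry :: "('a::euclidean_space \<Rightarrow> 'b::euclidean_space) \<Rightarrow> bool" where
  "affine_isometry \<phi> \<longleftrightarrow> (\<exists>p L. linear L \<and> (\<forall>z. norm (L z) = norm z) \<and> \<phi> = (\<lambda>z. p + L z))"

text \<open>(d-1)-dimensional Lebesgue measure lambda_E on the hyperplane E = range phi,
  i.e. the image of Lebesgue measure under the isometric parametrisation phi.\<close>
definition hyperplane_measure :: "('a::euclidean_space \<Rightarrow> 'b::euclidean_space) \<Rightarrow> 'b measure" where
  "hyperplane_measure \<phi> = distr lborel borel \<phi>"

definition hyperplane_vol :: "('a::euclidean_space \<Rightarrow> 'b::euclidean_space) \<Rightarrow> 'b set \<Rightarrow> real" where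
  "hyperplane_vol \<phi> S = measure lborel (\<phi> -` S)"

end

theory Submission
  imports Defs
begin

lemma convex_hull_range_vec:
  fixes Y :: "'n::finite \<Rightarrow> 'a::real_vector"
  shows "convex hull (range Y) =
    {y. \<exists>u::real^'n. (\<forall>i. 0 \<le> u$i) \<and> (\<Sum>i\<in>UNIV. u$i) = 1 \<and> (\<Sum>i\<in>UNIV. u$i *\<^sub>R Y i) = y}"
    (is "_ = ?H")
proof (rule hull_unique)
  show "range Y \<subseteq> ?H"
  proof
    fix y assume "y \<in> range Y"
    then obtain j where j: "y = Y j" by auto
    let ?u = "(\<chi> i. if i = j then 1 else 0) :: real^'n"
    have "(\<Sum>i\<in>UNIV. ?u$i) = 1" by simp
    moreover have "(\<Sum>i\<in>UNIV. ?u$i *\<^sub>R Y i) = y" using j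
    proof -
      have "(\<Sum>i\<in>UNIV. ?u$i *\<^sub>R Y i) = (\<Sum>i\<in>UNIV. if i = j then Y i else 0)"
        by (intro sum.cong) auto
      then show ?thesis using j by simp
    qed
    ultimately show "y \<in> ?H" by (intro CollectI exI[of _ ?u]) auto
  qed
  show "convex ?H"
  proof (rule convexI)
    fix x y :: 'a and a b :: real
    assume x: "x \<in> ?H" and y: "y \<in> ?H" and ab: "0 \<le> a" "0 \<le> b" "a + b = 1"
    from x obtain u where u: "\<forall>i. 0 \<le> u$i" "(\<Sum>i\<in>UNIV. u$i) = 1" "(\<Sum>i\<in>UNIV. u$i *\<^sub>R Y i) = x" by auto
    from y obtain v where v: "\<forall>i. 0 \<le> v$i" "(\<Sum>i\<in>UNIV. v$i) = 1" "(\<Sum>i\<in>UNIV. v$i *\<^sub>R Y i) = y" by auto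
    let ?w = "a *\<^sub>R u + b *\<^sub>R v"
    have "\<forall>i. 0 \<le> ?w$i" using u v ab by simp
    moreover have "(\<Sum>i\<in>UNIV. ?w$i) = 1" using u v ab
      by (simp add: sum.distrib sum_distrib_left[symmetric])
    moreover have "(\<Sum>i\<in>UNIV. ?w$i *\<^sub>R Y i) = a *\<^sub>R x + b *\<^sub>R y"
      using u(3) v(3) by (auto simp: scaleR_add_left sum.distrib scaleR_sum_right)
    ultimately show "a *\<^sub>R x + b *\<^sub>R y \<in> ?H" by blast
  qed
  show "?H \<subseteq> T" if "range Y \<subseteq> T" "convex T" for T
  proof
    fix y assume "y \<in> ?H"
    then obtain u where u: "\<forall>i. 0 \<le> u$i" "(\<Sum>i\<in>UNIV. u$i) = 1" "(\<Sum>i\<in>UNIV. u$i *\<^sub>R Y i) = y" by auto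
    have "(\<Sum>i\<in>UNIV. u$i *\<^sub>R Y i) \<in> T"
      by (rule convex_sum) (use u that in auto)
    then show "y \<in> T" using u by simp
  qed
qed

lemma closed_conv_set:
  "closed {(Y::('a::euclidean_space)^'n::finite, y). y \<in> convex hull (range (\<lambda>i. Y$i))}"
proof -
  define K where "K = {u::real^'n. (\<forall>i. 0 \<le> u$i) \<and> (\<Sum>i\<in>UNIV. u$i) = 1}"
  define T where "T = {(u::real^'n, (Y::'a^'n, y::'a)). (\<Sum>i\<in>UNIV. u$i *\<^sub>R Y$i) = y}"
  have "closed K"
    unfolding K_def Collect_conj_eq
    by (intro closed_Int closed_Collect_all closed_Collect_le closed_Collect_eq continuous_intros) 
  moreover have "bounded K"
  proof -
    have "K \<subseteq> cbox 0 1"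
    proof
      fix u assume "u \<in> K"
      then have u: "\<forall>i. 0 \<le> u$i" "(\<Sum>i\<in>UNIV. u$i) = 1" by (auto simp: K_def)
      have "u$i \<le> 1" for i
      proof -
        have "u$i \<le> (\<Sum>j\<in>UNIV. u$j)" by (rule member_le_sum) (use u in auto)
        then show ?thesis using u by simp
      qed
      then show "u \<in> cbox 0 1" using u by (simp add: mem_box_cart)
    qed
    then show ?thesis using bounded_cbox bounded_subset by blast
  qed
  ultimately have "compact K" using compact_eq_bounded_closed by blast
  moreover have "closed T"
  proof -
    have "T = {z. (\<Sum>i\<in>UNIV. (fst z)$i *\<^sub>R (fst (snd z))$i) = snd (snd z)}"
      by (auto simp: T_def)
    also have "closed \<dots>"
      by (intro closed_Collect_eq continuous_intros)
    finally show ?thesis .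
  qed
  ultimately have "closed {y. \<exists>x. x \<in> K \<and> (x, y) \<in> T}"
    by (rule closed_compact_projection)
  also have "{y. \<exists>x. x \<in> K \<and> (x, y) \<in> T} = {(Y, y). y \<in> convex hull (range (\<lambda>i. Y$i))}"
    by (auto simp: K_def T_def convex_hull_range_vec)
  finally show ?thesis .
qed
lemma vec_lambda_measurable_PiM[measurable]:
  "(\<lambda>x::'n::finite \<Rightarrow> 'a::euclidean_space. vec_lambda x) \<in> borel_measurable (PiM UNIV (\<lambda>_. borel))"
  apply (subst borel_measurable_euclidean_space) 
  apply (auto simp: Basis_vec_def inner_axis)
  done

lemma meas_conv_emeasure:
  fixes \<psi> :: "'b::euclidean_space \<Rightarrow> 'a::euclidean_space"
  assumes [measurable]: "\<psi> \<in> borel_measurable borel"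
  shows "(\<lambda>x::'n::finite \<Rightarrow> 'a. emeasure lborel (\<psi> -` (convex hull (range x))))
           \<in> borel_measurable (PiM UNIV (\<lambda>_. borel))"
proof -
  define C where "C = {(Y::'a^'n, y). y \<in> convex hull (range (\<lambda>i. Y$i))}"
  have "closed C" unfolding C_def by (rule closed_conv_set)
  then have [measurable]: "C \<in> sets borel" by simp
  define g where "g = (\<lambda>w::('n \<Rightarrow> 'a) \<times> 'b. (vec_lambda (fst w), \<psi> (snd w)))"
  have "g \<in> measurable (PiM UNIV (\<lambda>_. borel) \<Otimes>\<^sub>M lborel) (borel \<Otimes>\<^sub>M borel)"
    unfolding g_def by measurable
  then have g: "g \<in> borel_measurable (PiM UNIV (\<lambda>_. borel) \<Otimes>\<^sub>M lborel)"
    by (simp add: borel_prod)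
  define Q where "Q = g -` C \<inter> space (PiM UNIV (\<lambda>_. borel) \<Otimes>\<^sub>M lborel)"
  have "Q \<in> sets (PiM UNIV (\<lambda>_. borel) \<Otimes>\<^sub>M lborel)"
    unfolding Q_def by (rule measurable_sets[OF g]) simp
  from lborel.measurable_emeasure_Pair[OF this]
  have "(\<lambda>x. emeasure lborel (Pair x -` Q)) \<in> borel_measurable (PiM UNIV (\<lambda>_. borel))" .
  moreover have "Pair x -` Q = \<psi> -` (convex hull (range x))" for x
    by (auto simp: Q_def g_def C_def space_pair_measure space_PiM)
  ultimately show ?thesis by simp
qed
lemma PiM_distr_UNIV:
  fixes T :: "'a \<Rightarrow> 'b"
  assumes sM: "sigma_finite_measure M" and sD: "sigma_finite_measure (distr M N T)"
    and T[measurable]: "T \<in> measurable M N"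
  shows "PiM (UNIV::'i::finite set) (\<lambda>i. distr M N T)
       = distr (PiM UNIV (\<lambda>i. M)) (PiM UNIV (\<lambda>i. N)) (\<lambda>x i. T (x i))"
proof -
  interpret P: product_sigma_finite "\<lambda>i::'i. distr M N T"
    by (simp add: product_sigma_finite_def sD)
  interpret Q: product_sigma_finite "\<lambda>i::'i. M"
    by (simp add: product_sigma_finite_def sM)
  have meas: "(\<lambda>x i. T (x i)) \<in> measurable (PiM (UNIV::'i set) (\<lambda>i. M)) (PiM UNIV (\<lambda>i. N))"
  proof (rule measurable_PiM_single')
    fix i :: 'i
    have "(\<lambda>x. x i) \<in> measurable (PiM (UNIV::'i set) (\<lambda>i. M)) M"
      by (rule measurable_component_singleton) simp
    then show "(\<lambda>x. T (x i)) \<in> measurable (PiM (UNIV::'i set) (\<lambda>i. M)) N"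
      using T by (rule measurable_compose)
  next
    show "(\<lambda>\<omega> i. T (\<omega> i)) \<in> space (PiM (UNIV::'i set) (\<lambda>i. M)) \<rightarrow> (\<Pi>\<^sub>E i\<in>UNIV. space N)"
    proof
      fix \<omega> assume "\<omega> \<in> space (PiM (UNIV::'i set) (\<lambda>i. M))"
      then have "\<omega> i \<in> space M" for i by (simp add: space_PiM PiE_iff)
      then have "T (\<omega> i) \<in> space N" for i by (rule measurable_space[OF T])
      then show "(\<lambda>i. T (\<omega> i)) \<in> (\<Pi>\<^sub>E i\<in>UNIV. space N)" by (simp add: PiE_iff)
    qed
  qed
  show ?thesis
  proof (rule P.PiM_eqI[symmetric])
    show "sets (distr (PiM UNIV (\<lambda>i. M)) (PiM UNIV (\<lambda>i. N)) (\<lambda>x i. T (x i)))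
        = sets (PiM (UNIV::'i set) (\<lambda>i. distr M N T))"
      unfolding sets_distr by (rule sets_PiM_cong) simp_all
  next
    fix A assume A: "\<And>i. i \<in> (UNIV::'i set) \<Longrightarrow> A i \<in> sets (distr M N T)"
    have "Pi\<^sub>E UNIV A \<in> sets (PiM (UNIV::'i set) (\<lambda>i. N))"
      using A by (intro sets_PiM_I_finite) simp_all
    then have "emeasure (distr (PiM UNIV (\<lambda>i. M)) (PiM UNIV (\<lambda>i. N)) (\<lambda>x i. T (x i))) (Pi\<^sub>E UNIV A)
        = emeasure (PiM UNIV (\<lambda>i. M)) ((\<lambda>x i. T (x i)) -` Pi\<^sub>E UNIV A \<inter> space (PiM UNIV (\<lambda>i. M)))"
      by (rule emeasure_distr[OF meas])
    also have "(\<lambda>x i. T (x i)) -` Pi\<^sub>E UNIV A \<inter> space (PiM UNIV (\<lambda>i. M))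
        = Pi\<^sub>E UNIV (\<lambda>i. T -` A i \<inter> space M)"
      by (auto simp: space_PiM PiE_def Pi_def)
    also have "emeasure (PiM UNIV (\<lambda>i. M)) \<dots> = (\<Prod>i\<in>UNIV. emeasure M (T -` A i \<inter> space M))"
      using A by (intro Q.emeasure_PiM) (auto intro!: measurable_sets[OF T])
    also have "\<dots> = (\<Prod>i\<in>UNIV. emeasure (distr M N T) (A i))"
      using A by (intro prod.cong refl) (simp add: emeasure_distr)
    finally show "emeasure (distr (PiM UNIV (\<lambda>i. M)) (PiM UNIV (\<lambda>i. N)) (\<lambda>x i. T (x i))) (Pi\<^sub>E UNIV A)
        = (\<Prod>i\<in>UNIV. emeasure (distr M N T) (A i))" .
  qed simp
qed

lemma PiM_density_UNIV:
  assumes sM: "sigma_finite_measure M" and sD: "\<And>i. sigma_finite_measure (density M (f i))"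
    and f[measurable]: "\<And>i. f i \<in> borel_measurable M"
  shows "PiM (UNIV::'i::finite set) (\<lambda>i. density M (f i))
       = density (PiM UNIV (\<lambda>i. M)) (\<lambda>x. \<Prod>i\<in>UNIV. f i (x i))"
proof -
  interpret P: product_sigma_finite "\<lambda>i::'i. density M (f i)"
    by (simp add: product_sigma_finite_def sD)
  interpret Q: product_sigma_finite "\<lambda>i::'i. M"
    by (simp add: product_sigma_finite_def sM)
  show ?thesis
  proof (rule P.PiM_eqI[symmetric])
    show "sets (density (PiM UNIV (\<lambda>i. M)) (\<lambda>x. \<Prod>i\<in>UNIV. f i (x i)))
        = sets (PiM (UNIV::'i set) (\<lambda>i. density M (f i)))"
      unfolding sets_density by (rule sets_PiM_cong) simp_all
  next
    fix A assume A: "\<And>i. i \<in> (UNIV::'i set) \<Longrightarrow> A i \<in> sets (density M (f i))"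
    have A': "Pi\<^sub>E UNIV A \<in> sets (PiM (UNIV::'i set) (\<lambda>i. M))"
      using A by (intro sets_PiM_I_finite) simp_all
    have "emeasure (density (PiM UNIV (\<lambda>i. M)) (\<lambda>x. \<Prod>i\<in>UNIV. f i (x i))) (Pi\<^sub>E UNIV A)
        = (\<integral>\<^sup>+ x. (\<Prod>i\<in>UNIV. f i (x i)) * indicator (Pi\<^sub>E UNIV A) x \<partial>PiM UNIV (\<lambda>i. M))"
      by (rule emeasure_density[OF _ A']) measurable
    also have "\<dots> = (\<integral>\<^sup>+ x. (\<Prod>i\<in>UNIV. f i (x i) * indicator (A i) (x i)) \<partial>PiM UNIV (\<lambda>i. M))"
    proof (intro nn_integral_cong)
      fix x :: "'i \<Rightarrow> _"
      have "indicator (Pi\<^sub>E UNIV A) x = (\<Prod>i\<in>UNIV. indicator (A i) (x i) :: ennreal)"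
        by (simp add: indicator_def PiE_iff)
      then show "(\<Prod>i\<in>UNIV. f i (x i)) * indicator (Pi\<^sub>E UNIV A) x
          = (\<Prod>i\<in>UNIV. f i (x i) * indicator (A i) (x i))"
        by (simp add: prod.distrib)
    qed
    also have "\<dots> = (\<Prod>i\<in>UNIV. (\<integral>\<^sup>+ y. f i y * indicator (A i) y \<partial>M))"
    proof (rule Q.product_nn_integral_prod)
      fix i :: 'i
      have "A i \<in> sets M" using A[of i] by simp
      then show "(\<lambda>y. f i y * indicator (A i) y) \<in> borel_measurable M" by measurable
    qed simp
    also have "\<dots> = (\<Prod>i\<in>UNIV. emeasure (density M (f i)) (A i))"
    proof (intro prod.cong refl)
      fix i :: 'i
      have "A i \<in> sets M" using A[of i] by simp
      then show "(\<integral>\<^sup>+ y. f i y * indicator (A i) y \<partial>M) = emeasure (density M (f i)) (A i)"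
        by (intro emeasure_density[symmetric]) simp_all
    qed
    finally show "emeasure (density (PiM UNIV (\<lambda>i. M)) (\<lambda>x. \<Prod>i\<in>UNIV. f i (x i))) (Pi\<^sub>E UNIV A)
        = (\<Prod>i\<in>UNIV. emeasure (density M (f i)) (A i))" .
  qed simp
qed
lemma sigma_finite_distr_lborel:
  fixes T :: "'a::euclidean_space \<Rightarrow> 'b::euclidean_space"
  assumes T[measurable]: "T \<in> borel_measurable borel" and a: "0 \<le> a"
    and bound: "\<And>z. norm z \<le> a * norm (T z) + c"
  shows "sigma_finite_measure (distr lborel borel T)"
proof
  let ?A = "range (\<lambda>n::nat. cball (0::'b) (real n))"
  show "\<exists>A. countable A \<and> A \<subseteq> sets (distr lborel borel T) \<and> \<Union> A = space (distr lborel borel T)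
          \<and> (\<forall>a\<in>A. emeasure (distr lborel borel T) a \<noteq> \<infinity>)"
  proof (intro exI[of _ ?A] conjI ballI)
    show "countable ?A" by simp
    show "?A \<subseteq> sets (distr lborel borel T)" by auto
    show "\<Union> ?A = space (distr lborel borel T)"
    proof -
      have "y \<in> \<Union> ?A" for y :: 'b
      proof -
        obtain n :: nat where "norm y \<le> real n" using real_arch_simple by blast
        then show ?thesis by auto
      qed
      then show ?thesis by auto
    qed
    fix B assume "B \<in> ?A"
    then obtain n :: nat where B: "B = cball 0 (real n)" by auto
    have "emeasure (distr lborel borel T) B = emeasure lborel (T -` B)"
      using B by (simp add: emeasure_distr)
    also have "\<dots> \<le> emeasure lborel (cball (0::'a) (a * real n + c))"
    proof (rule emeasure_mono)
      show "T -` B \<subseteq> cball 0 (a * real n + c)"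
      proof
        fix z assume "z \<in> T -` B"
        then have "norm (T z) \<le> real n" using B by auto
        then have "a * norm (T z) \<le> a * real n" using a by (rule mult_left_mono)
        then show "z \<in> cball 0 (a * real n + c)" using bound[of z] by auto
      qed
    qed simp
    also have "\<dots> < \<infinity>" by (rule emeasure_lborel_cball_finite)
    finally show "emeasure (distr lborel borel T) B \<noteq> \<infinity>" by simp
  qed
qed

lemma sigma_finite_density_lborel:
  fixes g :: "'a::euclidean_space \<Rightarrow> real"
  assumes g[measurable]: "g \<in> borel_measurable borel"
  shows "sigma_finite_measure (density lborel (\<lambda>x. ennreal (g x)))"
proof
  let ?A = "range (\<lambda>n::nat. {x. g x \<le> real n} \<inter> cball (0::'a) (real n))"
  show "\<exists>A. countable A \<and> A \<subseteq> sets (density lborel (\<lambda>x. ennreal (g x))) \<and> \<Union> A = space (density lborel (\<lambda>x. ennreal (g x)))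
          \<and> (\<forall>a\<in>A. emeasure (density lborel (\<lambda>x. ennreal (g x))) a \<noteq> \<infinity>)"
  proof (intro exI[of _ ?A] conjI ballI)
    show "countable ?A" by simp
    show "?A \<subseteq> sets (density lborel (\<lambda>x. ennreal (g x)))" by auto
    show "\<Union> ?A = space (density lborel (\<lambda>x. ennreal (g x)))"
    proof -
      have "y \<in> \<Union> ?A" for y :: 'a
      proof -
        obtain n :: nat where "max (norm y) (g y) \<le> real n" using real_arch_simple by blast
        then show ?thesis by auto
      qed
      then show ?thesis by auto
    qed
    fix B assume "B \<in> ?A"
    then obtain n :: nat where B: "B = {x. g x \<le> real n} \<inter> cball 0 (real n)" by auto
    have Bm: "B \<in> sets lborel" using B by simp
    have "emeasure (density lborel (\<lambda>x. ennreal (g x))) B = (\<integral>\<^sup>+ x. ennreal (g x) * indicator B x \<partial>lborel)"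
      using Bm by (simp add: emeasure_density)
    also have "\<dots> \<le> (\<integral>\<^sup>+ x. ennreal (real n) * indicator (cball (0::'a) (real n)) x \<partial>lborel)"
    proof (rule nn_integral_mono)
      fix x :: 'a
      show "ennreal (g x) * indicator B x \<le> ennreal (real n) * indicator (cball 0 (real n)) x"
        by (auto simp: B indicator_def ennreal_leI)
    qed
    also have "\<dots> = ennreal (real n) * emeasure lborel (cball (0::'a) (real n))"
      by (simp add: nn_integral_cmult_indicator)
    also have "\<dots> < \<infinity>" using emeasure_lborel_cball_finite[of "0::'a" "real n"]
      by (simp add: ennreal_mult_less_top)
    finally show "emeasure (density lborel (\<lambda>x. ennreal (g x))) B \<noteq> \<infinity>" by simp
  qed
qed


lemma isometry_inner:
  fixes L :: "'a::real_inner \<Rightarrow> 'b::real_inner"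
  assumes "linear L" "\<And>z. norm (L z) = norm z"
  shows "L z \<bullet> L z = z \<bullet> z"
  using assms(2)[of z] by (metis power2_norm_eq_inner)

lemma norm_affine_isometry:
  fixes L :: "'a::euclidean_space \<Rightarrow> 'b::euclidean_space"
  assumes L: "linear L" "\<And>z. norm (L z) = norm z"
  shows "(norm (p + L z))\<^sup>2 = (p \<bullet> p - adjoint L p \<bullet> adjoint L p) + (norm (z + adjoint L p))\<^sup>2"
proof -
  define b where "b = adjoint L p"

  have 1: "L z \<bullet> p = z \<bullet> b" unfolding b_def using adjoint_works[OF L(1), of z p] by simp
  have 2: "L z \<bullet> L z = z \<bullet> z" by (rule isometry_inner[OF L])
  have "(norm (p + L z))\<^sup>2 = p \<bullet> p + 2 * (L z \<bullet> p) + L z \<bullet> L z"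
    by (simp add: power2_norm_eq_inner inner_add inner_commute)
  also have "\<dots> = p \<bullet> p + 2 * (z \<bullet> b) + z \<bullet> z" using 1 2 by simp
  also have "(norm (z + b))\<^sup>2 = z \<bullet> z + 2 * (z \<bullet> b) + b \<bullet> b"
    by (simp add: power2_norm_eq_inner inner_add inner_commute)
  ultimately show ?thesis unfolding b_def[symmetric] by simp
qed

lemma infdist_quadratic:
  fixes \<phi> :: "'a::real_normed_vector \<Rightarrow> 'b::real_normed_vector"
  assumes q: "\<And>z. (norm (\<phi> z))\<^sup>2 = H + (norm (z + b))\<^sup>2"
  shows "0 \<le> H" "infdist 0 (range \<phi>) = sqrt H"
proof -
  have qb: "(norm (\<phi> (-b)))\<^sup>2 = H" using q[of "-b"] by simp
  then show "0 \<le> H" by (metis zero_le_power2)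
  have "infdist 0 (range \<phi>) \<le> dist 0 (\<phi> (-b))" by (rule infdist_le) simp
  also have "\<dots> = sqrt H" using qb by (simp add: real_sqrt_unique)
  finally have le: "infdist 0 (range \<phi>) \<le> sqrt H" .
  have "sqrt H \<le> Inf (dist 0 ` range \<phi>)"
  proof (rule cInf_greatest)
    show "dist 0 ` range \<phi> \<noteq> {}" by simp
    fix y assume "y \<in> dist 0 ` range \<phi>"
    then obtain z where y: "y = norm (\<phi> z)" by auto
    have "H \<le> (norm (\<phi> z))\<^sup>2" using q[of z] by simp
    then have "sqrt H \<le> sqrt ((norm (\<phi> z))\<^sup>2)" by (rule real_sqrt_le_mono)
    then show "sqrt H \<le> y" using y by simp
  qed
  then have "sqrt H \<le> infdist 0 (range \<phi>)" by (simp add: infdist_def)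
  with le show "infdist 0 (range \<phi>) = sqrt H" by simp
qed

lemma inj_isometry:
  fixes L :: "'a::real_normed_vector \<Rightarrow> 'b::real_normed_vector"
  assumes L: "linear L" "\<And>z. norm (L z) = norm z"
  shows "inj (\<lambda>z. p + L z)"
proof (rule injI)
  fix x y assume "p + L x = p + L y"
  then have "L (x - y) = 0" using linear_diff[OF L(1)] by simp
  then have "norm (x - y) = 0" using L(2)[of "x - y"] by simp
  then show "x = y" by simp
qed

lemma convex_hull_affine_range:
  fixes L :: "'a::real_vector \<Rightarrow> 'b::real_vector"
  assumes "linear L"
  shows "convex hull (range (\<lambda>i. p + L (w i))) = (\<lambda>z. p + L z) ` (convex hull (range w))"
proof -
  have "range (\<lambda>i. p + L (w i)) = (\<lambda>x. p + x) ` (L ` range w)" by auto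
  then have "convex hull (range (\<lambda>i. p + L (w i))) = (\<lambda>x. p + x) ` (convex hull (L ` range w))"
    by (simp add: convex_hull_translation)
  also have "convex hull (L ` range w) = L ` (convex hull range w)"
    by (simp add: convex_hull_linear_image assms)
  finally show ?thesis by (simp add: image_image)
qed

lemma emeasure_lborel_affine_image:
  fixes t :: "'a::euclidean_space"
  assumes r: "r \<noteq> 0" and C: "C \<in> sets borel"
  shows "emeasure lborel ((\<lambda>x. t + r *\<^sub>R x) ` C) = ennreal (\<bar>r\<bar> ^ DIM('a)) * emeasure lborel C"
proof -
  let ?A = "\<lambda>x::'a. t + r *\<^sub>R x"
  have img: "?A ` C = (\<lambda>y. (1 / r) *\<^sub>R (y - t)) -` C"
  proof
    show "?A ` C \<subseteq> (\<lambda>y. (1 / r) *\<^sub>R (y - t)) -` C" using r by auto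
    show "(\<lambda>y. (1 / r) *\<^sub>R (y - t)) -` C \<subseteq> ?A ` C"
    proof
      fix y assume "y \<in> (\<lambda>y. (1 / r) *\<^sub>R (y - t)) -` C"
      then have "(1 / r) *\<^sub>R (y - t) \<in> C" by simp
      moreover have "y = ?A ((1 / r) *\<^sub>R (y - t))" using r by simp
      ultimately show "y \<in> ?A ` C" by blast
    qed
  qed
  have mB: "(\<lambda>y::'a. (1 / r) *\<^sub>R (y - t)) \<in> borel_measurable borel" by measurable
  have X: "?A ` C \<in> sets borel" unfolding img using measurable_sets[OF mB C] by simp
  have eq: "lborel = density (distr lborel borel ?A) (\<lambda>x. ennreal (\<bar>r\<bar> ^ DIM('a)))"
    by (rule lborel_affine[OF r])
  have "emeasure lborel (?A ` C) = emeasure (density (distr lborel borel ?A) (\<lambda>x. ennreal (\<bar>r\<bar> ^ DIM('a)))) (?A ` C)"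
    by (rule arg_cong[where f="\<lambda>M. emeasure M (?A ` C)", OF eq])
  also have "\<dots> = (\<integral>\<^sup>+ x. ennreal (\<bar>r\<bar> ^ DIM('a)) * indicator (?A ` C) x \<partial>distr lborel borel ?A)"
    using X by (simp add: emeasure_density)
  also have "\<dots> = ennreal (\<bar>r\<bar> ^ DIM('a)) * emeasure (distr lborel borel ?A) (?A ` C)"
    using X by (simp add: nn_integral_cmult_indicator)
  also have "emeasure (distr lborel borel ?A) (?A ` C) = emeasure lborel (?A -` (?A ` C))"
    using X by (simp add: emeasure_distr)
  also have "?A -` (?A ` C) = C" using r by auto
  finally show ?thesis .
qed

lemma beta_const_pos:
  assumes "\<beta> > -1"
  shows "beta_const m \<beta> > 0"
proof -
  have "Gamma (real m / 2 + \<beta> + 1) > 0" using assms by (intro Gamma_real_pos) simp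
  moreover have "Gamma (\<beta> + 1) > 0" using assms by (intro Gamma_real_pos) simp
  ultimately show ?thesis unfolding beta_const_def by simp
qed

lemma beta_dens_affine:
  fixes \<phi> :: "'a::real_normed_vector \<Rightarrow> 'b::real_normed_vector"
  assumes q: "\<And>z. (norm (\<phi> z))\<^sup>2 = h\<^sup>2 + (norm (z + b))\<^sup>2"
    and h: "0 \<le> h" "h < 1" and r: "r = sqrt (1 - h\<^sup>2)" and \<beta>: "\<beta> > -1"
  shows "beta_dens d \<beta> (\<phi> (-b + r *\<^sub>R w))
       = beta_const d \<beta> / beta_const e \<beta> * (r\<^sup>2) powr \<beta> * beta_dens e \<beta> w"
proof -
  have h2: "h\<^sup>2 < 1" using h by (simp add: power_less_one_iff abs_square_less_1)
  have r2: "r\<^sup>2 = 1 - h\<^sup>2" using r h2 by simp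
  have rpos: "r > 0" using r h2 by simp
  have n: "(norm (\<phi> (-b + r *\<^sub>R w)))\<^sup>2 = h\<^sup>2 + r\<^sup>2 * (norm w)\<^sup>2"
    using q[of "-b + r *\<^sub>R w"] rpos by (simp add: power_mult_distrib)
  have ce: "beta_const e \<beta> > 0" using \<beta> by (rule beta_const_pos)
  show ?thesis
  proof (cases "norm w \<le> 1")
    case True
    have "(norm w)\<^sup>2 \<le> 1" using True by (simp add: power_le_one)
    then have "r\<^sup>2 * (norm w)\<^sup>2 \<le> r\<^sup>2" by (simp add: mult_left_le)
    then have "(norm (\<phi> (-b + r *\<^sub>R w)))\<^sup>2 \<le> 1" using n r2 by simp
    then have le1: "norm (\<phi> (-b + r *\<^sub>R w)) \<le> 1" by (simp add: power_le_one_iff)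
    have "1 - (norm (\<phi> (-b + r *\<^sub>R w)))\<^sup>2 = r\<^sup>2 * (1 - (norm w)\<^sup>2)"
    proof -
      have "1 - (norm (\<phi> (-b + r *\<^sub>R w)))\<^sup>2 = r\<^sup>2 - r\<^sup>2 * (norm w)\<^sup>2"
        using n r2 by linarith
      then show ?thesis by (simp add: right_diff_distrib)
    qed
    then have "(1 - (norm (\<phi> (-b + r *\<^sub>R w)))\<^sup>2) powr \<beta> = (r\<^sup>2) powr \<beta> * (1 - (norm w)\<^sup>2) powr \<beta>"
      using \<open>(norm w)\<^sup>2 \<le> 1\<close> by (simp add: powr_mult)
    then show ?thesis using True le1 ce by (simp add: beta_dens_def)
  next
    case False
    then have "1 < (norm w)\<^sup>2" by (simp add: one_less_power)
    then have "r\<^sup>2 * 1 < r\<^sup>2 * (norm w)\<^sup>2" using rpos by (intro mult_strict_left_mono) simp_all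
    then have "1 < (norm (\<phi> (-b + r *\<^sub>R w)))\<^sup>2" using n r2 by simp
    then have "\<not> norm (\<phi> (-b + r *\<^sub>R w)) \<le> 1"
      by (metis norm_ge_zero power_le_one not_less)
    then show ?thesis using False by (simp add: beta_dens_def)
  qed
qed

lemma measurable_PiM_map:
  assumes T: "T \<in> measurable M N"
  shows "(\<lambda>x i. T (x i)) \<in> measurable (PiM (UNIV::'i::finite set) (\<lambda>i. M)) (PiM UNIV (\<lambda>i. N))"
proof (rule measurable_PiM_single')
  fix i :: 'i
  have "(\<lambda>x. x i) \<in> measurable (PiM (UNIV::'i set) (\<lambda>i. M)) M"
    by (rule measurable_component_singleton) simp
  then show "(\<lambda>x. T (x i)) \<in> measurable (PiM (UNIV::'i set) (\<lambda>i. M)) N"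
    using T by (rule measurable_compose)
next
  show "(\<lambda>\<omega> i. T (\<omega> i)) \<in> space (PiM (UNIV::'i set) (\<lambda>i. M)) \<rightarrow> (\<Pi>\<^sub>E i\<in>UNIV. space N)"
  proof
    fix \<omega> assume "\<omega> \<in> space (PiM (UNIV::'i set) (\<lambda>i. M))"
    then have "\<omega> i \<in> space M" for i by (simp add: space_PiM PiE_iff)
    then have "T (\<omega> i) \<in> space N" for i by (rule measurable_space[OF T])
    then show "(\<lambda>i. T (\<omega> i)) \<in> (\<Pi>\<^sub>E i\<in>UNIV. space N)" by (simp add: PiE_iff)
  qed
qed

lemma beta_dens_measurable[measurable]:
  "beta_dens d \<beta> \<in> borel_measurable (borel :: 'a::euclidean_space measure)"
  unfolding beta_dens_def[abs_def] by measurable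

lemma beta_dens_nonneg:
  assumes "\<beta> > -1" shows "0 \<le> beta_dens d \<beta> x"
  using beta_const_pos[OF assms, of d] by (simp add: beta_dens_def)

lemma const_identity:
  fixes r :: real
  assumes r: "r > 0"
  shows "(r ^ m) ^ d * (r ^ m) powr k * (r\<^sup>2) powr S
       = (r\<^sup>2) powr (S + real m / 2 * (k + real d))"
proof -
  have r2: "r\<^sup>2 = r powr 2" using r by (simp add: powr_realpow)
  have rm: "r ^ m = r powr real m" using r by (simp add: powr_realpow)
  have "(r ^ m) ^ d = r powr (real m * real d)"
  proof -
    have "(r ^ m) ^ d = r ^ (m * d)" by (simp add: power_mult)
    also have "\<dots> = r powr real (m * d)" using powr_realpow[OF r, of "m * d"] by simp
    finally show ?thesis by simp
  qed
  moreover have "(r ^ m) powr k = r powr (real m * k)" unfolding rm by (simp add: powr_powr)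
  moreover have "(r\<^sup>2) powr S = r powr (2 * S)" unfolding r2 by (simp add: powr_powr)
  moreover have "(r\<^sup>2) powr (S + real m / 2 * (k + real d)) = r powr (2 * S + real m * k + real m * real d)"
  proof -
    have "2 * (S + real m / 2 * (k + real d)) = 2 * S + real m * k + real m * real d"
      by (simp add: algebra_simps)
    then show ?thesis unfolding r2 powr_powr by (rule arg_cong)
  qed
  ultimately show ?thesis by (simp add: powr_add[symmetric] algebra_simps)
qed

lemma real_identity:
  fixes r V k :: real and cd ce \<beta> B :: "'n::finite \<Rightarrow> real"
  assumes r: "r > 0" and V: "V \<ge> 0" and ce: "\<And>i. ce i \<noteq> 0"
  shows "(r ^ m) ^ CARD('n) * ((r ^ m * V) powr k * (\<Prod>i\<in>UNIV. cd i / ce i * (r\<^sup>2) powr \<beta> i * B i))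
       = ((\<Prod>i\<in>UNIV. cd i) / (\<Prod>i\<in>UNIV. ce i) * (r\<^sup>2) powr ((\<Sum>i\<in>UNIV. \<beta> i) + real m / 2 * (k + real CARD('n))))
         * ((\<Prod>i\<in>UNIV. B i) * V powr k)"
proof -
  have "(r ^ m * V) powr k = (r ^ m) powr k * V powr k"
    using r V by (simp add: powr_mult)
  moreover have "(\<Prod>i\<in>UNIV. cd i / ce i * (r\<^sup>2) powr \<beta> i * B i)
      = (\<Prod>i\<in>UNIV. cd i) / (\<Prod>i\<in>UNIV. ce i) * (\<Prod>i\<in>UNIV. (r\<^sup>2) powr \<beta> i) * (\<Prod>i\<in>UNIV. B i)"
    by (simp add: prod.distrib prod_dividef)
  moreover have "(\<Prod>i\<in>UNIV. (r\<^sup>2) powr \<beta> i) = (r\<^sup>2) powr (\<Sum>i\<in>UNIV. \<beta> i)"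
    using r by (simp add: powr_sum)
  moreover have "(r ^ m) ^ CARD('n) * (r ^ m) powr k * (r\<^sup>2) powr (\<Sum>i\<in>UNIV. \<beta> i)
      = (r\<^sup>2) powr ((\<Sum>i\<in>UNIV. \<beta> i) + real m / 2 * (k + real CARD('n)))"
    by (rule const_identity[OF r])
  ultimately show ?thesis by (simp add: algebra_simps)
qed

theorem lemma3:
  fixes \<phi> :: "real^'m \<Rightarrow> real^'n" and E :: "(real^'n) set"
    and \<beta> :: "'n \<Rightarrow> real" and k h :: real
  assumes "CARD('n) = CARD('m) + 1" and "CARD('n) \<ge> 2"
    and "\<forall>i. \<beta> i > -1"
    and "affine_isometry \<phi>" and "E = range \<phi>"
    and "h = infdist 0 E" and "0 \<le> h" and "h < 1"
  shows "(\<integral>\<^sup>+ x. ennreal (hyperplane_vol \<phi> (convex hull (range x)) powr k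
              * (\<Prod>i\<in>UNIV. beta_dens CARD('n) (\<beta> i) (x i)))
            \<partial>(PiM UNIV (\<lambda>i. hyperplane_measure \<phi>)))
       = ennreal ((\<Prod>i\<in>UNIV. beta_const CARD('n) (\<beta> i)) / (\<Prod>i\<in>UNIV. beta_const (CARD('n) - 1) (\<beta> i))
            * (1 - h\<^sup>2) powr ((\<Sum>i\<in>UNIV. \<beta> i) + (real CARD('n) - 1) / 2 * (k + real CARD('n))))
         * (\<integral>\<^sup>+ y. ennreal (measure lborel (convex hull (range y)) powr k)
            \<partial>(PiM UNIV (\<lambda>i. density lborel (\<lambda>z::real^'m. ennreal (beta_dens (CARD('n) - 1) (\<beta> i) z)))))"
proof -
  have dm: "CARD('n) - 1 = CARD('m)" using assms(1) by simp
  have dm': "real CARD('n) - 1 = real CARD('m)" using assms(1) by simp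
  have \<beta>pos: "\<And>i. \<beta> i > -1" using assms(3) by simp
  obtain p L where L: "linear L" "\<And>z. norm (L z) = norm z" and phi: "\<phi> = (\<lambda>z. p + L z)"
    using assms(4) unfolding affine_isometry_def by blast
  define b where "b = adjoint L p"
  define H where "H = p \<bullet> p - b \<bullet> b"
  have q0: "\<And>z. (norm (\<phi> z))\<^sup>2 = H + (norm (z + b))\<^sup>2"
    unfolding phi H_def b_def by (rule norm_affine_isometry[OF L])
  have "infdist 0 (range \<phi>) = sqrt H" "0 \<le> H" using infdist_quadratic[OF q0] by auto
  then have hH: "h\<^sup>2 = H" using assms(5,6) by simp
  have q: "\<And>z. (norm (\<phi> z))\<^sup>2 = h\<^sup>2 + (norm (z + b))\<^sup>2" using q0 hH by simp
  define r where "r = sqrt (1 - h\<^sup>2)"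
  have h2: "h\<^sup>2 < 1" using assms(7,8) by (simp add: abs_square_less_1)
  have r2: "r\<^sup>2 = 1 - h\<^sup>2" and rpos: "r > 0" using h2 by (auto simp: r_def)
  define A where "A = (\<lambda>w::real^'m. -b + r *\<^sub>R w)"
  have Lc: "continuous_on UNIV L" using L(1) by (simp add: linear_continuous_on linear_conv_bounded_linear)
  have phim[measurable]: "\<phi> \<in> borel_measurable borel"
    unfolding phi by (intro borel_measurable_continuous_onI continuous_on_add continuous_on_const Lc)
  have Am[measurable]: "A \<in> borel_measurable borel" unfolding A_def by measurable
  have injphi: "inj \<phi>" unfolding phi by (rule inj_isometry[OF L])

  define F where "F = (\<lambda>x::'n \<Rightarrow> real^'n. ennreal (hyperplane_vol \<phi> (convex hull (range x)) powr k
              * (\<Prod>i\<in>UNIV. beta_dens CARD('n) (\<beta> i) (x i))))"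
  have Fm: "F \<in> borel_measurable (PiM UNIV (\<lambda>i. borel))"
  proof -
    have e: "(\<lambda>x::'n \<Rightarrow> real^'n. emeasure lborel (\<phi> -` (convex hull (range x))))
           \<in> borel_measurable (PiM UNIV (\<lambda>_. borel))"
      by (rule meas_conv_emeasure[OF phim])
    have "(\<lambda>x::'n \<Rightarrow> real^'n. hyperplane_vol \<phi> (convex hull (range x)))
           \<in> borel_measurable (PiM UNIV (\<lambda>_. borel))"
      unfolding hyperplane_vol_def measure_def using e by measurable
    then show ?thesis unfolding F_def by measurable
  qed

  define V where "V = (\<lambda>y::'n \<Rightarrow> real^'m. measure lborel (convex hull (range y)))"
  have Vm: "V \<in> borel_measurable (PiM UNIV (\<lambda>_. borel))"
  proof -
    have e: "(\<lambda>x::'n \<Rightarrow> real^'m. emeasure lborel (id -` (convex hull (range x))))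
           \<in> borel_measurable (PiM UNIV (\<lambda>_. borel))"
      by (rule meas_conv_emeasure) simp
    then show ?thesis unfolding V_def measure_def by simp
  qed

  have sf1: "sigma_finite_measure (distr lborel borel \<phi>)"
  proof (rule sigma_finite_distr_lborel[OF phim, of 1 "norm p"])
    fix z
    have "norm z = norm (\<phi> z - p)" using L(2)[of z] by (simp add: phi)
    also have "\<dots> \<le> norm (\<phi> z) + norm p" by (rule norm_triangle_ineq4)
    finally show "norm z \<le> 1 * norm (\<phi> z) + norm p" by simp
  qed simp
  have phim': "\<phi> \<in> measurable lborel borel" using phim by simp
  have P1: "PiM (UNIV::'n set) (\<lambda>i. hyperplane_measure \<phi>)
      = distr (PiM UNIV (\<lambda>i. lborel)) (PiM UNIV (\<lambda>i. borel)) (\<lambda>x i. \<phi> (x i))"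
    unfolding hyperplane_measure_def
    by (rule PiM_distr_UNIV[OF lborel.sigma_finite_measure_axioms sf1 phim'])
  have mphi: "(\<lambda>x i. \<phi> (x i)) \<in> measurable (PiM (UNIV::'n set) (\<lambda>i. lborel)) (PiM UNIV (\<lambda>i. borel))"
    by (rule measurable_PiM_map[OF phim'])
  define G where "G = (\<lambda>z::'n \<Rightarrow> real^'m. F (\<lambda>i. \<phi> (z i)))"
  have Gm: "G \<in> borel_measurable (PiM (UNIV::'n set) (\<lambda>i. lborel))"
    unfolding G_def by (rule measurable_compose[OF mphi Fm])
  have step1: "(\<integral>\<^sup>+ x. F x \<partial>PiM UNIV (\<lambda>i. hyperplane_measure \<phi>))
      = (\<integral>\<^sup>+ z. G z \<partial>PiM (UNIV::'n set) (\<lambda>i. lborel))"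
    unfolding P1 G_def by (rule nn_integral_distr[OF mphi]) (simp add: Fm)

  have sfA: "sigma_finite_measure (distr lborel borel A)"
  proof (rule sigma_finite_distr_lborel[OF Am, of "1/r" "norm b / r"])
    fix w :: "real^'m"
    have "r * norm w = norm (A w + b)" using rpos by (simp add: A_def)
    also have "\<dots> \<le> norm (A w) + norm b" by (rule norm_triangle_ineq)
    finally have "r * norm w \<le> norm (A w) + norm b" .
    then show "norm w \<le> 1/r * norm (A w) + norm b / r" using rpos by (simp add: field_simps)
  qed (use rpos in simp)
  define c where "c = ennreal (\<bar>r\<bar> ^ DIM(real^'m))"
  have lb: "(lborel::(real^'m) measure) = density (distr lborel borel A) (\<lambda>x. c)"
    unfolding A_def c_def by (rule lborel_affine) (use rpos in simp)
  have sfc: "sigma_finite_measure (density (distr lborel borel A) (\<lambda>x. c))"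
    by (subst lb[symmetric]) (rule lborel.sigma_finite_measure_axioms)
  have Am': "A \<in> measurable lborel borel" using Am by simp
  have mA: "(\<lambda>x i. A (x i)) \<in> measurable (PiM (UNIV::'n set) (\<lambda>i. lborel)) (PiM UNIV (\<lambda>i. borel))"
    by (rule measurable_PiM_map[OF Am'])
  have P2: "PiM (UNIV::'n set) (\<lambda>i. lborel::(real^'m) measure)
      = density (distr (PiM UNIV (\<lambda>i. lborel)) (PiM UNIV (\<lambda>i. borel)) (\<lambda>x i. A (x i))) (\<lambda>x. \<Prod>i\<in>(UNIV::'n set). c)"
  proof -
    have "PiM (UNIV::'n set) (\<lambda>i. lborel::(real^'m) measure) = PiM UNIV (\<lambda>i. density (distr lborel borel A) (\<lambda>x. c))"
      by (rule arg_cong[where f="\<lambda>M. PiM (UNIV::'n set) (\<lambda>i. M)", OF lb])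
    also have "\<dots> = density (PiM UNIV (\<lambda>i. distr lborel borel A)) (\<lambda>x. \<Prod>i\<in>(UNIV::'n set). c)"
      by (rule PiM_density_UNIV[where f="\<lambda>i x. c", OF sfA sfc]) simp
    also have "PiM (UNIV::'n set) (\<lambda>i. distr lborel borel A) = distr (PiM UNIV (\<lambda>i. lborel)) (PiM UNIV (\<lambda>i. borel)) (\<lambda>x i. A (x i))"
      by (rule PiM_distr_UNIV[OF lborel.sigma_finite_measure_axioms sfA Am'])
    finally show ?thesis .
  qed
  have sPi: "sets (PiM (UNIV::'n set) (\<lambda>i. lborel::(real^'m) measure)) = sets (PiM UNIV (\<lambda>i. borel))"
    by (rule sets_PiM_cong) simp_all
  have Gm': "G \<in> borel_measurable (PiM (UNIV::'n set) (\<lambda>i. borel))"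
    using Gm measurable_cong_sets[OF sPi refl] by simp
  have step2: "(\<integral>\<^sup>+ z. G z \<partial>PiM (UNIV::'n set) (\<lambda>i. lborel))
      = (\<integral>\<^sup>+ w. (\<Prod>i\<in>(UNIV::'n set). c) * G (\<lambda>i. A (w i)) \<partial>PiM UNIV (\<lambda>i. lborel))"
  proof -
    have "(\<integral>\<^sup>+ z. G z \<partial>PiM (UNIV::'n set) (\<lambda>i. lborel))
        = (\<integral>\<^sup>+ z. G z \<partial>density (distr (PiM UNIV (\<lambda>i. lborel)) (PiM UNIV (\<lambda>i. borel)) (\<lambda>x i. A (x i))) (\<lambda>x. \<Prod>i\<in>(UNIV::'n set). c))"
      by (rule arg_cong[where f="\<lambda>M. nn_integral M G", OF P2])
    also have "\<dots> = (\<integral>\<^sup>+ z. (\<Prod>i\<in>(UNIV::'n set). c) * G z \<partial>distr (PiM UNIV (\<lambda>i. lborel)) (PiM UNIV (\<lambda>i. borel)) (\<lambda>x i. A (x i)))"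
      by (rule nn_integral_density) (use Gm' in simp_all)
    also have "\<dots> = (\<integral>\<^sup>+ w. (\<Prod>i\<in>(UNIV::'n set). c) * G (\<lambda>i. A (w i)) \<partial>PiM UNIV (\<lambda>i. lborel))"
      by (rule nn_integral_distr[OF mA]) (use Gm' in simp)
    finally show ?thesis .
  qed

  define K where "K = (\<Prod>i\<in>UNIV. beta_const CARD('n) (\<beta> i)) / (\<Prod>i\<in>UNIV. beta_const (CARD('n) - 1) (\<beta> i))
            * (1 - h\<^sup>2) powr ((\<Sum>i\<in>UNIV. \<beta> i) + (real CARD('n) - 1) / 2 * (k + real CARD('n)))"
  define bd where "bd = (\<lambda>i. beta_dens (CARD('n) - 1) (\<beta> i) :: real^'m \<Rightarrow> real)"
  have bdm[measurable]: "\<And>i. bd i \<in> borel_measurable borel" unfolding bd_def by simp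
  have bd0: "\<And>i z. 0 \<le> bd i z" unfolding bd_def by (rule beta_dens_nonneg[OF \<beta>pos])
  have cdpos: "\<And>i. beta_const CARD('n) (\<beta> i) > 0" by (rule beta_const_pos[OF \<beta>pos])
  have cepos: "\<And>i. beta_const (CARD('n) - 1) (\<beta> i) > 0" by (rule beta_const_pos[OF \<beta>pos])
  have K0: "0 \<le> K" unfolding K_def using cdpos cepos
    by (intro mult_nonneg_nonneg divide_nonneg_nonneg prod_nonneg) (auto intro: less_imp_le)
  have pw: "(\<Prod>i\<in>(UNIV::'n set). c) * G (\<lambda>i. A (w i))
      = ennreal K * ((\<Prod>i\<in>UNIV. ennreal (bd i (w i))) * ennreal (V w powr k))" for w
  proof -
    let ?C = "convex hull (range w)"
    have fin: "finite (range w)" by simp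
    have cC: "compact ?C" by (rule compact_convex_hull[OF finite_imp_compact[OF fin]])
    have V0: "0 \<le> V w" unfolding V_def by simp
    have c1: "\<phi> -` (convex hull (range (\<lambda>i. \<phi> (A (w i))))) = A ` ?C"
    proof -
      have "convex hull (range (\<lambda>i. \<phi> (A (w i)))) = \<phi> ` (convex hull (range (\<lambda>i. A (w i))))"
        unfolding phi by (rule convex_hull_affine_range[OF L(1)])
      moreover have "convex hull (range (\<lambda>i. A (w i))) = A ` ?C"
        unfolding A_def by (rule convex_hull_affine_range[OF linear_scaleR])
      ultimately show ?thesis using injphi by (simp add: inj_vimage_image_eq)
    qed
    have c2: "measure lborel (A ` ?C) = r ^ CARD('m) * V w"
    proof -
      have "emeasure lborel (A ` ?C) = ennreal (\<bar>r\<bar> ^ DIM(real^'m)) * emeasure lborel ?C"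
        unfolding A_def by (rule emeasure_lborel_affine_image) (use rpos cC in \<open>auto intro: borel_compact\<close>)
      then show ?thesis using rpos unfolding V_def measure_def by (simp add: enn2real_mult)
    qed
    have bdaff: "beta_dens CARD('n) (\<beta> i) (\<phi> (A (w i)))
        = beta_const CARD('n) (\<beta> i) / beta_const (CARD('n) - 1) (\<beta> i) * (r\<^sup>2) powr (\<beta> i) * bd i (w i)" for i
      unfolding A_def bd_def by (rule beta_dens_affine[OF q assms(7,8) r_def \<beta>pos])
    define g where "g = (r ^ CARD('m) * V w) powr k * (\<Prod>i\<in>UNIV. beta_const CARD('n) (\<beta> i) / beta_const (CARD('n) - 1) (\<beta> i) * (r\<^sup>2) powr (\<beta> i) * bd i (w i))"
    have g0: "0 \<le> g" unfolding g_def using cdpos cepos bd0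
      by (intro mult_nonneg_nonneg divide_nonneg_nonneg prod_nonneg) (auto intro: less_imp_le)
    have Gw: "G (\<lambda>i. A (w i)) = ennreal g"
      unfolding G_def F_def hyperplane_vol_def g_def using c1 c2 bdaff by simp
    have cprod: "(\<Prod>i\<in>(UNIV::'n set). c) = ennreal ((r ^ CARD('m)) ^ CARD('n))"
      unfolding c_def using rpos by (simp add: ennreal_power)
    have ident: "(r ^ CARD('m)) ^ CARD('n) * g = K * ((\<Prod>i\<in>UNIV. bd i (w i)) * V w powr k)"
      unfolding K_def r2[symmetric] dm' g_def
      by (rule real_identity[OF rpos V0]) (use cepos in \<open>simp add: less_imp_neq[symmetric]\<close>)
    have P0: "0 \<le> (\<Prod>i\<in>UNIV. bd i (w i))" by (intro prod_nonneg) (simp add: bd0)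
    have "(\<Prod>i\<in>(UNIV::'n set). c) * G (\<lambda>i. A (w i)) = ennreal ((r ^ CARD('m)) ^ CARD('n) * g)"
      unfolding cprod Gw using rpos g0 by (simp add: ennreal_mult)
    also have "\<dots> = ennreal (K * ((\<Prod>i\<in>UNIV. bd i (w i)) * V w powr k))" unfolding ident ..
    also have "\<dots> = ennreal K * (ennreal (\<Prod>i\<in>UNIV. bd i (w i)) * ennreal (V w powr k))"
      using K0 P0 by (simp add: ennreal_mult)
    also have "ennreal (\<Prod>i\<in>UNIV. bd i (w i)) = (\<Prod>i\<in>UNIV. ennreal (bd i (w i)))"
      by (rule prod_ennreal[symmetric]) (simp add: bd0)
    finally show ?thesis .
  qed

  have Vm': "V \<in> borel_measurable (PiM (UNIV::'n set) (\<lambda>i. lborel))"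
    using Vm measurable_cong_sets[OF sPi refl] by simp
  have Wm: "(\<lambda>w. (\<Prod>i\<in>UNIV. ennreal (bd i (w i))) * ennreal (V w powr k))
      \<in> borel_measurable (PiM (UNIV::'n set) (\<lambda>i. lborel))"
    using Vm' by measurable
  have step3: "(\<integral>\<^sup>+ w. (\<Prod>i\<in>(UNIV::'n set). c) * G (\<lambda>i. A (w i)) \<partial>PiM UNIV (\<lambda>i. lborel))
      = ennreal K * (\<integral>\<^sup>+ w. (\<Prod>i\<in>UNIV. ennreal (bd i (w i))) * ennreal (V w powr k) \<partial>PiM UNIV (\<lambda>i. lborel))"
    unfolding pw by (rule nn_integral_cmult[OF Wm])
  have P3: "PiM (UNIV::'n set) (\<lambda>i. density lborel (\<lambda>z::real^'m. ennreal (beta_dens (CARD('n) - 1) (\<beta> i) z)))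
      = density (PiM UNIV (\<lambda>i. lborel)) (\<lambda>y. \<Prod>i\<in>UNIV. ennreal (bd i (y i)))"
    unfolding bd_def
    by (rule PiM_density_UNIV[OF lborel.sigma_finite_measure_axioms])
       (auto intro: sigma_finite_density_lborel)
  have RHS: "(\<integral>\<^sup>+ y. ennreal (measure lborel (convex hull (range y)) powr k)
            \<partial>(PiM UNIV (\<lambda>i. density lborel (\<lambda>z::real^'m. ennreal (beta_dens (CARD('n) - 1) (\<beta> i) z)))))
      = (\<integral>\<^sup>+ w. (\<Prod>i\<in>UNIV. ennreal (bd i (w i))) * ennreal (V w powr k) \<partial>PiM UNIV (\<lambda>i. lborel))"
  proof -
    have "(\<integral>\<^sup>+ y. ennreal (measure lborel (convex hull (range y)) powr k)
            \<partial>density (PiM UNIV (\<lambda>i. lborel)) (\<lambda>y. \<Prod>i\<in>UNIV. ennreal (bd i (y i))))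
        = (\<integral>\<^sup>+ y. ennreal (V y powr k) \<partial>density (PiM (UNIV::'n set) (\<lambda>i. lborel)) (\<lambda>y. \<Prod>i\<in>UNIV. ennreal (bd i (y i))))"
      by (simp add: V_def)
    also have "\<dots> = (\<integral>\<^sup>+ w. (\<Prod>i\<in>UNIV. ennreal (bd i (w i))) * ennreal (V w powr k) \<partial>PiM UNIV (\<lambda>i. lborel))"
      by (rule nn_integral_density) (use Vm' in simp_all)
    finally show ?thesis unfolding P3 .
  qed
  have LHS: "(\<integral>\<^sup>+ x. ennreal (hyperplane_vol \<phi> (convex hull (range x)) powr k
              * (\<Prod>i\<in>UNIV. beta_dens CARD('n) (\<beta> i) (x i)))
            \<partial>(PiM UNIV (\<lambda>i. hyperplane_measure \<phi>)))
      = (\<integral>\<^sup>+ x. F x \<partial>PiM UNIV (\<lambda>i. hyperplane_measure \<phi>))"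
    unfolding F_def ..
  show ?thesis unfolding LHS step1 step2 step3 RHS K_def ..
qed

end
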